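(* Let $\mathcal{M}$ be a space of closed smooth Riemannian manifolds, considered up to isospectrality, and let $\gamma$ be a real number with $\sup\{\dim X: X\in\mathcal{M}\}<2\gamma$. For $X_1,X_2\in\mathcal{M}$ define \[ d(X_1,X_2):=\sup_{\gamma<s<\gamma+1}\left|\log\left|\frac{\zeta_{X_1}(s)}{\zeta_{X_2}(s)}\right|\right|, \] where $\Re(s)>\gamma$ is a common half plane of convergence of the spectral zeta functions of $X_1$ and $X_2$. Then $d$ defines a metric on $\mathcal{M}$.
   Context: Two Riemannian manifolds are isospectral if their Laplace–Beltrami operators have the same spectrum with multiplicities. For a closed smooth Riemannian manifold $X$ with Laplace–Beltrami operator $\Delta_X$, the spectral zeta function is $\zeta_X(s)=\mathrm{tr}(\Delta_X^{-s})=\sum_{\lambda}\lambda^{-s}$, the sum running over the nonzero eigenvalues of $\Delta_X$ counted with multiplicity; it converges absolutely for $\Re(s)>\dim(X)/2$. *)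

theory Defs
  imports "HOL-Analysis.Analysis"
begin

text \<open>A closed Riemannian manifold is represented, up to isospectrality, by its
  spectrum of nonzero Laplace eigenvalues, given as a multiplicity function
  m :: real => nat (m l = multiplicity of l as an eigenvalue).\<close>

definition spec_support :: "(real \<Rightarrow> nat) \<Rightarrow> real set" where
  "spec_support m = {l. 0 < m l}"

definition spec_zeta :: "(real \<Rightarrow> nat) \<Rightarrow> real \<Rightarrow> real" where
  "spec_zeta m s = (\<Sum>\<^sub>\<infinity>l\<in>spec_support m. real (m l) * l powr (-s))"

text \<open>Spectral data of an n-dimensional closed manifold: nonzero eigenvalues
  are positive, there is at least one, and the zeta series converges
  absolutely for s > n/2.\<close>
definition admissible_spectrum :: "nat \<Rightarrow> (real \<Rightarrow> nat) \<Rightarrow> bool" where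
  "admissible_spectrum n m \<longleftrightarrow>
     spec_support m \<subseteq> {0<..} \<and> spec_support m \<noteq> {} \<and>
     (\<forall>s::real. real n / 2 < s \<longrightarrow>
        (\<lambda>l. real (m l) * l powr (-s)) summable_on spec_support m)"

definition zeta_dist :: "real \<Rightarrow> (real \<Rightarrow> nat) \<Rightarrow> (real \<Rightarrow> nat) \<Rightarrow> real" where
  "zeta_dist \<gamma> X1 X2 =
     (SUP s\<in>{\<gamma><..<\<gamma>+1}. \<bar>ln \<bar>spec_zeta X1 s / spec_zeta X2 s\<bar>\<bar>)"

end

theory Submission imports Defs "HOL-Complex_Analysis.Complex_Analysis"
begin

lemma powr_bound2:
  fixes l a b s :: real
  assumes "0 < l" "a \<le> s" "s \<le> b"
  shows "l powr (-s) \<le> l powr (-a) + l powr (-b)"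
proof (cases "1 \<le> l")
  case True
  then have "l powr (-s) \<le> l powr (-a)" using assms by (intro powr_mono) auto
  then show ?thesis by (smt (verit) powr_ge_zero)
next
  case False
  then have "l powr (-s) \<le> l powr (-b)" using assms by (intro powr_mono') auto
  then show ?thesis by (smt (verit) powr_ge_zero)
qed

lemma powr_lower2:
  fixes l a b s :: real
  assumes "0 < l" "a \<le> s" "s \<le> b"
  shows "min (l powr (-a)) (l powr (-b)) \<le> l powr (-s)"
proof (cases "1 \<le> l")
  case True
  then have "l powr (-b) \<le> l powr (-s)" using assms by (intro powr_mono) auto
  then show ?thesis by linarith
next
  case False
  then have "l powr (-a) \<le> l powr (-s)" using assms by (intro powr_mono') auto
  then show ?thesis by linarith
qed

lemma summable_ext:
  assumes "(\<lambda>l. real (m l) * l powr (-s)) summable_on spec_support m" "spec_support m \<subseteq> S"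
  shows "(\<lambda>l. real (m l) * l powr (-s)) summable_on S"
  using assms(1) by (subst summable_on_cong_neutral[where T=S and g="(\<lambda>l. real (m l) * l powr (-s))", symmetric])
     (use assms(2) in \<open>auto simp: spec_support_def\<close>)

lemma zeta_ext:
  assumes "spec_support m \<subseteq> S"
  shows "spec_zeta m s = (\<Sum>\<^sub>\<infinity>l\<in>S. real (m l) * l powr (-s))"
  unfolding spec_zeta_def
  by (rule infsum_cong_neutral) (use assms in \<open>auto simp: spec_support_def\<close>)

lemma zeta_bounds:
  assumes adm: "admissible_spectrum n m" and g: "real n < 2 * \<gamma>"
  shows "\<exists>L U. 0 < L \<and> (\<forall>s\<in>{\<gamma><..<\<gamma>+1}. L \<le> spec_zeta m s \<and> spec_zeta m s \<le> U)"
proof -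
  let ?S = "spec_support m"
  let ?t = "\<lambda>s l. real (m l) * l powr (-s)"
  have pos: "?S \<subseteq> {0<..}" and ne: "?S \<noteq> {}"
    and sm: "\<And>s. real n / 2 < s \<Longrightarrow> ?t s summable_on ?S"
    using adm unfolding admissible_spectrum_def by auto
  obtain l0 where l0: "l0 \<in> ?S" using ne by auto
  have l0p: "0 < l0" using l0 pos by auto
  have m0: "1 \<le> real (m l0)" using l0 by (simp add: spec_support_def)
  define L where "L = min (l0 powr (-\<gamma>)) (l0 powr (-(\<gamma>+1)))"
  define U where "U = infsum (?t \<gamma>) ?S + infsum (?t (\<gamma>+1)) ?S"
  have Lp: "0 < L" using l0p by (simp add: L_def)
  have "L \<le> spec_zeta m s \<and> spec_zeta m s \<le> U" if s: "s \<in> {\<gamma><..<\<gamma>+1}" for s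
  proof
    have sms: "?t s summable_on ?S" using s g by (intro sm) auto
    have "L \<le> l0 powr (-s)" unfolding L_def using s l0p by (intro powr_lower2) auto
    also have "\<dots> \<le> ?t s l0" using m0 by (simp add: mult_le_cancel_right1)
    also have "\<dots> = sum (?t s) {l0}" by simp
    also have "\<dots> \<le> infsum (?t s) ?S"
      by (rule finite_sum_le_infsum[OF sms]) (use l0 in auto)
    finally show "L \<le> spec_zeta m s" by (simp add: spec_zeta_def)
    have sm1: "?t \<gamma> summable_on ?S" "?t (\<gamma>+1) summable_on ?S" using g sm[of \<gamma>] sm[of "\<gamma>+1"] by auto
    have "infsum (?t s) ?S \<le> infsum (\<lambda>l. ?t \<gamma> l + ?t (\<gamma>+1) l) ?S"
    proof (rule infsum_mono[OF sms summable_on_add[OF sm1]])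
      fix l assume "l \<in> ?S"
      then have "0 < l" using pos by auto
      then have "l powr (-s) \<le> l powr (-\<gamma>) + l powr (-(\<gamma>+1))"
        using s by (intro powr_bound2) auto
      then show "?t s l \<le> ?t \<gamma> l + ?t (\<gamma>+1) l"
        by (simp add: distrib_left[symmetric] mult_left_mono)
    qed
    also have "\<dots> = U" unfolding U_def by (rule infsum_add[OF sm1])
    finally show "spec_zeta m s \<le> U" by (simp add: spec_zeta_def)
  qed
  then show ?thesis using Lp by blast
qed

lemma ln_bound:
  fixes L U x :: real
  assumes "0 < L" "L \<le> x" "x \<le> U"
  shows "\<bar>ln x\<bar> \<le> \<bar>ln L\<bar> + \<bar>ln U\<bar>"
proof -
  have "ln L \<le> ln x" using assms by simp
  moreover have "ln x \<le> ln U" using assms by simp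
  ultimately show ?thesis by linarith
qed

lemma zeta_pos:
  assumes "admissible_spectrum n m" "real n < 2 * \<gamma>" "s \<in> {\<gamma><..<\<gamma>+1}"
  shows "0 < spec_zeta m s"
  using zeta_bounds[OF assms(1,2)] assms(3) by force

lemma ratio_eq:
  fixes a b :: real assumes "0 < a" "0 < b"
  shows "\<bar>ln \<bar>a / b\<bar>\<bar> = \<bar>ln a - ln b\<bar>"
  using assms by (simp add: ln_div)

lemma pair_bdd:
  assumes "admissible_spectrum n1 m1" "real n1 < 2 * \<gamma>"
      and "admissible_spectrum n2 m2" "real n2 < 2 * \<gamma>"
  shows "bdd_above ((\<lambda>s. \<bar>ln \<bar>spec_zeta m1 s / spec_zeta m2 s\<bar>\<bar>) ` {\<gamma><..<\<gamma>+1})"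
proof -
  obtain L1 U1 where b1: "0 < L1" "\<forall>s\<in>{\<gamma><..<\<gamma>+1}. L1 \<le> spec_zeta m1 s \<and> spec_zeta m1 s \<le> U1"
    using zeta_bounds[OF assms(1,2)] by blast
  obtain L2 U2 where b2: "0 < L2" "\<forall>s\<in>{\<gamma><..<\<gamma>+1}. L2 \<le> spec_zeta m2 s \<and> spec_zeta m2 s \<le> U2"
    using zeta_bounds[OF assms(3,4)] by blast
  have "\<bar>ln \<bar>spec_zeta m1 s / spec_zeta m2 s\<bar>\<bar> \<le> (\<bar>ln L1\<bar> + \<bar>ln U1\<bar>) + (\<bar>ln L2\<bar> + \<bar>ln U2\<bar>)"
    if s: "s \<in> {\<gamma><..<\<gamma>+1}" for s
  proof -
    have p: "0 < spec_zeta m1 s" "0 < spec_zeta m2 s" using b1 b2 s by force+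
    have "\<bar>ln (spec_zeta m1 s)\<bar> \<le> \<bar>ln L1\<bar> + \<bar>ln U1\<bar>" using b1 s by (intro ln_bound) auto
    moreover have "\<bar>ln (spec_zeta m2 s)\<bar> \<le> \<bar>ln L2\<bar> + \<bar>ln U2\<bar>" using b2 s by (intro ln_bound) auto
    ultimately show ?thesis using ratio_eq[OF p] by linarith
  qed
  then show ?thesis by (intro bdd_aboveI2) 
qed

lemma dist_upper:
  assumes "admissible_spectrum n1 m1" "real n1 < 2 * \<gamma>"
      and "admissible_spectrum n2 m2" "real n2 < 2 * \<gamma>" "s \<in> {\<gamma><..<\<gamma>+1}"
  shows "\<bar>ln \<bar>spec_zeta m1 s / spec_zeta m2 s\<bar>\<bar> \<le> zeta_dist \<gamma> m1 m2"
  unfolding zeta_dist_def by (rule cSUP_upper[OF assms(5) pair_bdd[OF assms(1-4)]])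

lemma dist_least:
  assumes "\<And>s. s \<in> {\<gamma><..<\<gamma>+1} \<Longrightarrow> \<bar>ln \<bar>spec_zeta m1 s / spec_zeta m2 s\<bar>\<bar> \<le> B"
  shows "zeta_dist \<gamma> m1 m2 \<le> B"
  unfolding zeta_dist_def by (rule cSUP_least) (use assms in auto)


lemma finite_small:
  fixes c :: "real \<Rightarrow> real" and S :: "real set"
  assumes pos: "S \<subseteq> {0<..}" and s1: "0 < s1"
   and sm: "(\<lambda>l. \<bar>c l\<bar> * l powr (-s1)) summable_on S"
   and int: "\<And>l. c l \<noteq> 0 \<Longrightarrow> 1 \<le> \<bar>c l\<bar>"
   and x: "0 < x"
  shows "finite {l\<in>S. c l \<noteq> 0 \<and> l \<le> x}"
proof (rule ccontr)
  let ?W = "{l\<in>S. c l \<noteq> 0 \<and> l \<le> x}"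
  let ?f = "\<lambda>l. \<bar>c l\<bar> * l powr (-s1)"
  define e where "e = x powr (-s1)"
  have e: "0 < e" using x by (simp add: e_def)
  assume inf: "infinite ?W"
  define K where "K = infsum ?f S"
  obtain N :: nat where N: "K < real N * e"
    using reals_Archimedean3[OF e] by blast
  obtain F where F: "F \<subseteq> ?W" "finite F" "card F = N"
    using infinite_arbitrarily_large[OF inf] by blast
  have "real N * e = (\<Sum>l\<in>F. e)" using F by simp
  also have "\<dots> \<le> sum ?f F"
  proof (rule sum_mono)
    fix l assume l: "l \<in> F"
    then have l0: "0 < l" "l \<le> x" "1 \<le> \<bar>c l\<bar>" using F pos int by auto
    have "e \<le> l powr (-s1)" unfolding e_def using l0 s1 by (intro powr_mono2') auto
    also have "\<dots> \<le> ?f l" using l0 by (simp add: mult_le_cancel_right1)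
    finally show "e \<le> ?f l" .
  qed
  also have "\<dots> \<le> K" unfolding K_def
    by (rule finite_sum_le_infsum[OF sm F(2)]) (use F in auto)
  finally show False using N by linarith
qed

lemma powr_shift:
  fixes l s1 :: real assumes "0 < l"
  shows "l powr (-(s1 + real n)) = l powr (-s1) / l ^ n"
proof -
  have "l powr (-(s1 + real n)) = l powr (-s1 - real n)" by simp
  also have "\<dots> = l powr (-s1) / l powr (real n)" by (rule powr_diff)
  also have "\<dots> = l powr (-s1) / l ^ n" using assms by (simp add: powr_realpow)
  finally show ?thesis .
qed

lemma dirichlet_zero:
  fixes c :: "real \<Rightarrow> real" and S :: "real set" and \<sigma>0 :: real
  assumes pos: "S \<subseteq> {0<..}" and s0: "0 \<le> \<sigma>0"
   and abs_sm: "\<And>s. \<sigma>0 < s \<Longrightarrow> (\<lambda>l. \<bar>c l\<bar> * l powr (-s)) summable_on S"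
   and zero: "\<And>s. \<sigma>0 < s \<Longrightarrow> (\<Sum>\<^sub>\<infinity>l\<in>S. c l * l powr (-s)) = 0"
   and int: "\<And>l. c l \<noteq> 0 \<Longrightarrow> 1 \<le> \<bar>c l\<bar>"
  shows "\<forall>l\<in>S. c l = 0"
proof (rule ccontr)
  assume "\<not> (\<forall>l\<in>S. c l = 0)"
  then obtain x where x: "x \<in> S" "c x \<noteq> 0" by blast
  define s1 where "s1 = \<sigma>0 + 1"
  have s1: "0 < s1" "\<sigma>0 < s1" using s0 by (auto simp: s1_def)
  define T where "T = {l\<in>S. c l \<noteq> 0}"
  define W where "W = {l\<in>S. c l \<noteq> 0 \<and> l \<le> x}"
  have xpos: "0 < x" using x pos by auto
  have Wfin: "finite W" unfolding W_def by (rule finite_small[OF pos s1(1) abs_sm[OF s1(2)] int xpos])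
  have xW: "x \<in> W" using x by (auto simp: W_def)
  define l0 where "l0 = Min W"
  have l0W: "l0 \<in> W" unfolding l0_def using Wfin xW Min_in by blast
  have l0T: "l0 \<in> T" using l0W by (auto simp: W_def T_def)
  have l0pos: "0 < l0" using l0T pos by (auto simp: T_def)
  have l0min: "l0 \<le> l" if "l \<in> T" for l
  proof (cases "l \<le> x")
    case True then have "l \<in> W" using that by (auto simp: W_def T_def)
    then show ?thesis unfolding l0_def using Wfin by simp
  next
    case False
    moreover have "l0 \<le> x" unfolding l0_def using Wfin xW by simp
    ultimately show ?thesis by linarith
  qed
  define F where "F = {l\<in>S. c l \<noteq> 0 \<and> l \<le> l0 + 1} - {l0}"
  have l01: "0 < l0 + 1" using l0pos by linarith
  have "finite {l\<in>S. c l \<noteq> 0 \<and> l \<le> l0 + 1}"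
    by (rule finite_small[OF pos s1(1) abs_sm[OF s1(2)] int l01])
  then have Ffin: "finite F" unfolding F_def by simp
  define l2 where "l2 = Min (insert (l0+1) F)"
  have l2in: "l2 \<in> insert (l0+1) F" unfolding l2_def using Ffin by (intro Min_in) auto
  have l2gt: "l0 < l2"
  proof -
    { assume "l2 \<in> F"
      then have "l2 \<in> T" "l2 \<noteq> l0" by (auto simp: F_def T_def)
      then have ?thesis using l0min by force }
    then show ?thesis using l2in by auto
  qed
  have l2le: "l2 \<le> l" if "l \<in> T - {l0}" for l
  proof (cases "l \<le> l0 + 1")
    case True then have "l \<in> F" using that by (auto simp: F_def T_def)
    then show ?thesis unfolding l2_def using Ffin by simp
  next
    case False
    moreover have "l2 \<le> l0 + 1" unfolding l2_def using Ffin by simp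
    ultimately show ?thesis by linarith
  qed
  have l2pos: "0 < l2" using l0pos l2gt by linarith
  define K where "K = (\<Sum>\<^sub>\<infinity>l\<in>T-{l0}. \<bar>c l\<bar> * l powr (-s1))"
  define q where "q = l0 / l2"
  have q: "0 < q" "q < 1" using l0pos l2gt l2pos by (auto simp: q_def)
  define A where "A = \<bar>c l0\<bar> * l0 powr (-s1)"
  have A: "0 < A" using l0T l0pos by (auto simp: A_def T_def)
  have "(\<lambda>n. K * q ^ n) \<longlonglongrightarrow> K * 0"
    by (intro tendsto_mult tendsto_const LIMSEQ_power_zero) (use q in auto)
  then have "\<forall>\<^sub>F n in sequentially. K * q ^ n < A" using A by (auto dest: order_tendstoD(2))
  then obtain n where n: "K * q ^ n < A" by (auto simp: eventually_sequentially)
  define s where "s = s1 + real n"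
  have s: "\<sigma>0 < s" using s1 by (simp add: s_def)
  have TS: "T \<subseteq> S" by (auto simp: T_def)
  have absT: "(\<lambda>l. \<bar>c l\<bar> * l powr (-s')) summable_on (T - {l0})" if "\<sigma>0 < s'" for s'
    by (rule summable_on_subset[OF abs_sm[OF that]]) (use TS in auto)
  have normeq: "norm (c l * l powr (-s')) = \<bar>c l\<bar> * l powr (-s')" if "l \<in> S" for l s'
    by (simp add: abs_mult)
  have smT: "(\<lambda>l. c l * l powr (-s)) summable_on (T - {l0})"
  proof (rule abs_summable_summable)
    show "(\<lambda>l. norm (c l * l powr (-s))) summable_on (T - {l0})"
      using absT[OF s] by (rule summable_on_cong[THEN iffD1, rotated]) (use TS in \<open>auto simp: abs_mult\<close>)
  qed
  have "0 = (\<Sum>\<^sub>\<infinity>l\<in>S. c l * l powr (-s))" using zero[OF s] by simp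
  also have "\<dots> = (\<Sum>\<^sub>\<infinity>l\<in>T. c l * l powr (-s))"
    by (rule infsum_cong_neutral) (auto simp: T_def)
  also have "T = insert l0 (T - {l0})" using l0T by auto
  also have "(\<Sum>\<^sub>\<infinity>l\<in>insert l0 (T - {l0}). c l * l powr (-s)) =
      c l0 * l0 powr (-s) + (\<Sum>\<^sub>\<infinity>l\<in>T - {l0}. c l * l powr (-s))"
    by (rule infsum_insert[OF smT]) simp
  finally have eq: "c l0 * l0 powr (-s) = - (\<Sum>\<^sub>\<infinity>l\<in>T - {l0}. c l * l powr (-s))" by linarith
  have "A / l0 ^ n = \<bar>c l0 * l0 powr (-s)\<bar>"
    unfolding A_def s_def powr_shift[OF l0pos] using l0pos by (simp add: abs_mult)
  also have "\<dots> = norm (\<Sum>\<^sub>\<infinity>l\<in>T - {l0}. c l * l powr (-s))" using eq by simp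
  also have "\<dots> \<le> (\<Sum>\<^sub>\<infinity>l\<in>T - {l0}. norm (c l * l powr (-s)))"
    by (rule norm_infsum_bound) (use absT[OF s] in \<open>rule summable_on_cong[THEN iffD1, rotated]\<close>, use TS in \<open>auto simp: abs_mult\<close>)
  also have "\<dots> = (\<Sum>\<^sub>\<infinity>l\<in>T - {l0}. \<bar>c l\<bar> * l powr (-s))"
    by (rule infsum_cong) (simp add: abs_mult)
  also have "\<dots> \<le> (\<Sum>\<^sub>\<infinity>l\<in>T - {l0}. \<bar>c l\<bar> * l powr (-s1) * (1 / l2 ^ n))"
  proof (rule infsum_mono[OF absT[OF s] summable_on_cmult_left[OF absT[OF s1(2)]]])
    fix l assume l: "l \<in> T - {l0}"
    then have lp: "0 < l" using TS pos by auto
    have "l2 ^ n \<le> l ^ n" using l2le[OF l] l2pos by (intro power_mono) auto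
    then have ineq: "l powr (-s1) / l ^ n \<le> l powr (-s1) / l2 ^ n"
      using l2pos lp by (intro divide_left_mono) auto
    show "\<bar>c l\<bar> * l powr (-s) \<le> \<bar>c l\<bar> * l powr (-s1) * (1 / l2 ^ n)"
      unfolding s_def powr_shift[OF lp] using mult_left_mono[OF ineq abs_ge_zero[of "c l"]] by simp
  qed
  also have "\<dots> = K * (1 / l2 ^ n)" unfolding K_def by (rule infsum_cmult_left')
  finally have "A / l0 ^ n \<le> K / l2 ^ n" by simp
  then have "A \<le> K * l0 ^ n / l2 ^ n" using l0pos by (simp add: field_simps)
  also have "\<dots> = K * q ^ n" by (simp add: q_def power_divide)
  finally show False using n by linarith
qed

lemma term_norm:
  fixes l :: real and z :: complex assumes "0 < l"
  shows "norm (complex_of_real (c l) * exp (- z * complex_of_real (ln l))) = \<bar>c l\<bar> * l powr (- Re z)"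
  using assms by (simp add: norm_mult powr_def)

lemma term_real:
  fixes l s :: real assumes "0 < l"
  shows "complex_of_real (c l) * exp (- complex_of_real s * complex_of_real (ln l)) = complex_of_real (c l * l powr (-s))"
  using assms by (simp add: powr_def exp_of_real[symmetric])

lemma analytic_zero:
  fixes c :: "real \<Rightarrow> real" and S :: "real set" and \<sigma>0 \<gamma> :: real
  assumes pos: "S \<subseteq> {0<..}" and g: "\<sigma>0 < \<gamma>"
   and abs_sm: "\<And>s. \<sigma>0 < s \<Longrightarrow> (\<lambda>l. \<bar>c l\<bar> * l powr (-s)) summable_on S"
   and zero: "\<And>s. s \<in> {\<gamma><..<\<gamma>+1} \<Longrightarrow> (\<Sum>\<^sub>\<infinity>l\<in>S. c l * l powr (-s)) = 0"
   and s: "\<sigma>0 < s"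
  shows "(\<Sum>\<^sub>\<infinity>l\<in>S. c l * l powr (-s)) = 0"
proof -
  define t where "t = (\<lambda>l (z::complex). complex_of_real (c l) * exp (- z * complex_of_real (ln l)))"
  define G where "G = (\<lambda>z. \<Sum>\<^sub>\<infinity>l\<in>S. t l z)"
  define H where "H = {z. \<sigma>0 < Re z}"
  have Hopen: "open H" unfolding H_def by (rule open_halfspace_Re_gt)
  have Hconn: "connected H" unfolding H_def by (intro convex_connected convex_halfspace_Re_gt)
  have diff: "G field_differentiable (at z0)" if z0: "z0 \<in> H" for z0
  proof -
    define r where "r = (Re z0 - \<sigma>0) / 2"
    have r: "0 < r" using z0 by (simp add: H_def r_def)
    define M where "M = (\<lambda>l. \<bar>c l\<bar> * l powr (-(Re z0 - r)) + \<bar>c l\<bar> * l powr (-(Re z0 + r)))"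
    have Msum: "M summable_on S" unfolding M_def
      by (intro summable_on_add abs_sm) (use r in \<open>auto simp: r_def field_simps\<close>)
    have Mle: "norm (t l z) \<le> M l" if l: "l \<in> S" and z: "z \<in> cball z0 r" for l z
    proof -
      have lp: "0 < l" using l pos by auto
      have "\<bar>Re z - Re z0\<bar> \<le> r"
        using z abs_Re_le_cmod[of "z - z0"] by (simp add: dist_norm norm_minus_commute)
      then have "l powr (- Re z) \<le> l powr (-(Re z0 - r)) + l powr (-(Re z0 + r))"
        using lp by (intro powr_bound2) auto
      then have "\<bar>c l\<bar> * l powr (- Re z) \<le> \<bar>c l\<bar> * (l powr (-(Re z0 - r)) + l powr (-(Re z0 + r)))"
        by (rule mult_left_mono) simp
      then show ?thesis unfolding t_def term_norm[OF lp] M_def by (simp add: distrib_left)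
    qed
    have ulim: "uniform_limit (cball z0 r) (\<lambda>X z. \<Sum>l\<in>X. t l z) G (finite_subsets_at_top S)"
      unfolding G_def by (rule Weierstrass_m_test_general[OF Mle Msum])
    have ev: "\<forall>\<^sub>F X in finite_subsets_at_top S. continuous_on (cball z0 r) (\<lambda>z. \<Sum>l\<in>X. t l z) \<and>
               (\<lambda>z. \<Sum>l\<in>X. t l z) holomorphic_on ball z0 r"
      unfolding t_def by (intro always_eventually allI conjI continuous_intros holomorphic_intros)
    obtain "G holomorphic_on ball z0 r"
      by (rule holomorphic_uniform_limit[OF ev ulim]) simp
    then show ?thesis using r by (intro holomorphic_on_imp_differentiable_at[of _ "ball z0 r"]) auto
  qed
  have Ghol: "G holomorphic_on H"
    unfolding holomorphic_on_def using diff field_differentiable_at_within by blast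
  have Greal: "G (complex_of_real s') = complex_of_real (\<Sum>\<^sub>\<infinity>l\<in>S. c l * l powr (-s'))"
    if s': "\<sigma>0 < s'" for s'
  proof -
    have "G (complex_of_real s') = (\<Sum>\<^sub>\<infinity>l\<in>S. complex_of_real (c l * l powr (-s')))"
      unfolding G_def t_def by (rule infsum_cong) (use pos term_real in auto)
    also have "\<dots> = complex_of_real (\<Sum>\<^sub>\<infinity>l\<in>S. c l * l powr (-s'))"
    proof (rule infsumI, rule has_sum_of_real, rule has_sum_infsum, rule abs_summable_summable)
      show "(\<lambda>l. norm (c l * l powr (-s'))) summable_on S"
        using abs_sm[OF s'] by (rule summable_on_cong[THEN iffD1, rotated]) (auto simp: abs_mult)
    qed
    finally show ?thesis .
  qed
  define U where "U = complex_of_real ` {\<gamma><..<\<gamma>+1}"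
  have "G (complex_of_real s) = 0"
  proof (rule analytic_continuation[OF Ghol Hopen Hconn])
    show "U \<subseteq> H" using g by (auto simp: U_def H_def)
    show "complex_of_real (\<gamma> + 1/2) \<in> H" using g by (simp add: H_def)
    show "complex_of_real s \<in> H" using s by (simp add: H_def)
    show "G z = 0" if "z \<in> U" for z
      using that g Greal zero by (auto simp: U_def)
    show "complex_of_real (\<gamma> + 1/2) islimpt U"
    proof (rule islimpt_approachable[THEN iffD2], intro allI impI)
      fix e :: real assume e: "0 < e"
      define x where "x = complex_of_real (\<gamma> + 1/2 + min (e/2) (1/4))"
      have "x \<in> U" unfolding x_def U_def using e by (intro imageI) auto
      moreover have "x \<noteq> complex_of_real (\<gamma> + 1/2)" using e by (simp add: x_def)
      moreover have "dist x (complex_of_real (\<gamma> + 1/2)) < e"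
        using e by (simp add: x_def dist_norm)
      ultimately show "\<exists>x'\<in>U. x' \<noteq> complex_of_real (\<gamma> + 1/2) \<and> dist x' (complex_of_real (\<gamma> + 1/2)) < e"
        by blast
    qed
  qed
  then show ?thesis using Greal[OF s] by simp
qed

lemma uniqueness:
  assumes a1: "admissible_spectrum n1 m1" and g1: "real n1 < 2 * \<gamma>"
      and a2: "admissible_spectrum n2 m2" and g2: "real n2 < 2 * \<gamma>"
      and eq: "\<And>s. s \<in> {\<gamma><..<\<gamma>+1} \<Longrightarrow> spec_zeta m1 s = spec_zeta m2 s"
  shows "m1 = m2"
proof -
  define \<sigma>0 where "\<sigma>0 = max (real n1) (real n2) / 2"
  have s0: "0 \<le> \<sigma>0" "\<sigma>0 < \<gamma>" using g1 g2 by (auto simp: \<sigma>0_def)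
  define S where "S = spec_support m1 \<union> spec_support m2"
  have S1: "spec_support m1 \<subseteq> S" and S2: "spec_support m2 \<subseteq> S" by (auto simp: S_def)
  have pos: "S \<subseteq> {0<..}" using a1 a2 by (auto simp: S_def admissible_spectrum_def)
  define c where "c = (\<lambda>l. real (m1 l) - real (m2 l))"
  have int: "1 \<le> \<bar>c l\<bar>" if "c l \<noteq> 0" for l
  proof -
    have "m1 l \<noteq> m2 l" using that by (auto simp: c_def)
    then have "m1 l + 1 \<le> m2 l \<or> m2 l + 1 \<le> m1 l" by arith
    then have "real (m1 l) + 1 \<le> real (m2 l) \<or> real (m2 l) + 1 \<le> real (m1 l)"
      by (metis of_nat_1 of_nat_add of_nat_le_iff)
    then show ?thesis by (auto simp: c_def)
  qed
  have sm1: "(\<lambda>l. real (m1 l) * l powr (-s)) summable_on S" if "\<sigma>0 < s" for s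
    using a1 that by (intro summable_ext[OF _ S1]) (auto simp: admissible_spectrum_def \<sigma>0_def)
  have sm2: "(\<lambda>l. real (m2 l) * l powr (-s)) summable_on S" if "\<sigma>0 < s" for s
    using a2 that by (intro summable_ext[OF _ S2]) (auto simp: admissible_spectrum_def \<sigma>0_def)
  have abs_sm: "(\<lambda>l. \<bar>c l\<bar> * l powr (-s)) summable_on S" if s: "\<sigma>0 < s" for s
  proof (rule summable_on_comparison_test[OF summable_on_add[OF sm1[OF s] sm2[OF s]]])
    fix l assume "l \<in> S"
    have "\<bar>c l\<bar> \<le> real (m1 l) + real (m2 l)" by (simp add: c_def)
    then show "\<bar>c l\<bar> * l powr (-s) \<le> real (m1 l) * l powr (-s) + real (m2 l) * l powr (-s)"
      by (metis distrib_right mult_right_mono powr_ge_zero)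
  qed simp
  have zero: "(\<Sum>\<^sub>\<infinity>l\<in>S. c l * l powr (-s)) = 0" if s: "s \<in> {\<gamma><..<\<gamma>+1}" for s
  proof -
    have s': "\<sigma>0 < s" using s s0 by auto
    have "(\<Sum>\<^sub>\<infinity>l\<in>S. c l * l powr (-s)) = (\<Sum>\<^sub>\<infinity>l\<in>S. real (m1 l) * l powr (-s) + (- (real (m2 l) * l powr (-s))))"
      by (rule infsum_cong) (simp add: c_def algebra_simps)
    also have "\<dots> = spec_zeta m1 s - spec_zeta m2 s"
      by (subst infsum_add[OF sm1[OF s'] summable_on_uminus[THEN iffD2, OF sm2[OF s']]])
         (simp add: infsum_uminus zeta_ext[OF S1] zeta_ext[OF S2])
    finally show ?thesis using eq[OF s] by simp
  qed
  have allz: "(\<Sum>\<^sub>\<infinity>l\<in>S. c l * l powr (-s)) = 0" if "\<sigma>0 < s" for s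
    by (rule analytic_zero[OF pos s0(2) abs_sm zero that])
  have cz: "\<forall>l\<in>S. c l = 0" by (rule dirichlet_zero[OF pos s0(1) abs_sm allz int])
  show ?thesis
  proof
    fix l show "m1 l = m2 l"
    proof (cases "l \<in> S")
      case True then show ?thesis using cz by (auto simp: c_def)
    next
      case False then show ?thesis by (auto simp: S_def spec_support_def)
    qed
  qed
qed

theorem proposition2:
  fixes \<M> :: "(real \<Rightarrow> nat) set" and dim :: "(real \<Rightarrow> nat) \<Rightarrow> nat" and \<gamma> :: real
  assumes adm: "\<And>X. X \<in> \<M> \<Longrightarrow> admissible_spectrum (dim X) X"
    and dim_bound: "\<forall>X\<in>\<M>. real (dim X) < 2 * \<gamma>"
  shows "(\<forall>X1\<in>\<M>. \<forall>X2\<in>\<M>. 0 \<le> zeta_dist \<gamma> X1 X2)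
       \<and> (\<forall>X1\<in>\<M>. \<forall>X2\<in>\<M>. zeta_dist \<gamma> X1 X2 = 0 \<longleftrightarrow> X1 = X2)
       \<and> (\<forall>X1\<in>\<M>. \<forall>X2\<in>\<M>. zeta_dist \<gamma> X1 X2 = zeta_dist \<gamma> X2 X1)
       \<and> (\<forall>X1\<in>\<M>. \<forall>X2\<in>\<M>. \<forall>X3\<in>\<M>.
            zeta_dist \<gamma> X1 X3 \<le> zeta_dist \<gamma> X1 X2 + zeta_dist \<gamma> X2 X3)"
proof (intro conjI ballI)
  have mid: "\<gamma> + 1/2 \<in> {\<gamma><..<\<gamma>+1}" by auto
  fix X1 X2 assume X: "X1 \<in> \<M>" "X2 \<in> \<M>"
  note h = adm[OF X(1)] bspec[OF dim_bound X(1)] adm[OF X(2)] bspec[OF dim_bound X(2)]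
  show "0 \<le> zeta_dist \<gamma> X1 X2"
    using dist_upper[OF h mid] by linarith
  show "zeta_dist \<gamma> X1 X2 = zeta_dist \<gamma> X2 X1"
  proof -
    have "\<bar>ln \<bar>spec_zeta X1 s / spec_zeta X2 s\<bar>\<bar> = \<bar>ln \<bar>spec_zeta X2 s / spec_zeta X1 s\<bar>\<bar>"
      if "s \<in> {\<gamma><..<\<gamma>+1}" for s
      using ratio_eq[OF zeta_pos[OF h(1,2) that] zeta_pos[OF h(3,4) that]]
            ratio_eq[OF zeta_pos[OF h(3,4) that] zeta_pos[OF h(1,2) that]] by linarith
    then show ?thesis unfolding zeta_dist_def by (intro SUP_cong) auto
  qed
  show "zeta_dist \<gamma> X1 X2 = 0 \<longleftrightarrow> X1 = X2"
  proof
    assume d0: "zeta_dist \<gamma> X1 X2 = 0"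
    have "spec_zeta X1 s = spec_zeta X2 s" if s: "s \<in> {\<gamma><..<\<gamma>+1}" for s
    proof -
      have "\<bar>ln (spec_zeta X1 s) - ln (spec_zeta X2 s)\<bar> \<le> 0"
        using dist_upper[OF h s] d0 ratio_eq[OF zeta_pos[OF h(1,2) s] zeta_pos[OF h(3,4) s]] by simp
      then have "ln (spec_zeta X1 s) = ln (spec_zeta X2 s)" by simp
      then show ?thesis using zeta_pos[OF h(1,2) s] zeta_pos[OF h(3,4) s] by simp
    qed
    then show "X1 = X2" by (rule uniqueness[OF h])
  next
    assume "X1 = X2"
    then have "zeta_dist \<gamma> X1 X2 \<le> 0"
      by (intro dist_least) (use zeta_pos[OF h(1,2)] in auto)
    then show "zeta_dist \<gamma> X1 X2 = 0" using dist_upper[OF h mid] by linarith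
  qed
next
  fix X1 X2 X3 assume X: "X1 \<in> \<M>" "X2 \<in> \<M>" "X3 \<in> \<M>"
  note h1 = adm[OF X(1)] bspec[OF dim_bound X(1)]
  note h2 = adm[OF X(2)] bspec[OF dim_bound X(2)]
  note h3 = adm[OF X(3)] bspec[OF dim_bound X(3)]
  show "zeta_dist \<gamma> X1 X3 \<le> zeta_dist \<gamma> X1 X2 + zeta_dist \<gamma> X2 X3"
  proof (rule dist_least)
    fix s assume s: "s \<in> {\<gamma><..<\<gamma>+1}"
    have "\<bar>ln \<bar>spec_zeta X1 s / spec_zeta X3 s\<bar>\<bar> = \<bar>ln (spec_zeta X1 s) - ln (spec_zeta X3 s)\<bar>"
      by (rule ratio_eq[OF zeta_pos[OF h1 s] zeta_pos[OF h3 s]])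
    moreover have "\<bar>ln \<bar>spec_zeta X1 s / spec_zeta X2 s\<bar>\<bar> = \<bar>ln (spec_zeta X1 s) - ln (spec_zeta X2 s)\<bar>"
      by (rule ratio_eq[OF zeta_pos[OF h1 s] zeta_pos[OF h2 s]])
    moreover have "\<bar>ln \<bar>spec_zeta X2 s / spec_zeta X3 s\<bar>\<bar> = \<bar>ln (spec_zeta X2 s) - ln (spec_zeta X3 s)\<bar>"
      by (rule ratio_eq[OF zeta_pos[OF h2 s] zeta_pos[OF h3 s]])
    moreover note dist_upper[OF h1 h2 s] dist_upper[OF h2 h3 s]
    ultimately show "\<bar>ln \<bar>spec_zeta X1 s / spec_zeta X3 s\<bar>\<bar> \<le> zeta_dist \<gamma> X1 X2 + zeta_dist \<gamma> X2 X3"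
      by linarith
  qed
qed

end
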